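(* Let $\mu_0=\rho_0(\theta)d\theta$ and $\mu_1=\rho_1(\theta)d\theta$ be probability measures on $\mathbb{S}^1$ in $\mathcal{M}^+_0$ with densities $\rho_0,\rho_1\in L^1(\mathbb{S}^1)$, and assume there is $c>0$ with $\rho_0(\theta)\ge c$ and $\rho_1(\theta)\ge c$ for a.e. $\theta\in\mathbb{S}^1$. Then $\overline{W}_2(\mu_0,\mu_1)<+\infty$.
   Context: $\mathbb{S}^1$ is identified with $[0,2\pi)$; $\mathcal{M}^+_0$ is the set of positive finite Radon measures $\mu$ on $\mathbb{S}^1$ with $\int e^{i\theta}d\mu(\theta)=0$. A pair $(\rho,m)$ of finite signed Radon measures on $[0,1]\times\mathbb{S}^1$ satisfies the continuity equation $\partial_t\rho+\partial_\theta m=0$ with boundary conditions $\rho_0=\mu_0$, $\rho_1=\mu_1$ if for all $\phi\in C^1([0,1]\times\mathbb{S}^1)$: $\int\partial_t\phi\,d\rho+\int\partial_\theta\phi\,dm=\int_{\mathbb{S}^1}\phi(1,\cdot)d\mu_1-\int_{\mathbb{S}^1}\phi(0,\cdot)d\mu_0$; then $\rho=\rho_t\otimes dt$ for measures $\rho_t$ on $\mathbb{S}^1$. Define $f(d,m)=\frac{|m|^2}{2d}$ if $d>0$, $f(0,0)=0$, $f=+\infty$ otherwise. For $\nu=(\rho,m)$, $\mathcal{A}(\nu)=\int_{[0,1]\times\mathbb{S}^1}f\big(\frac{d\nu}{d\lambda}\big)d\lambda$ for any measure $\lambda$ with $|\rho|,|m|\ll\lambda$. The constrained Wasserstein distance $\overline{W}_2(\mu_0,\mu_1)$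 is the infimum of $\mathcal{A}(\rho,m)$ over pairs satisfying the continuity equation with boundary conditions $\mu_0,\mu_1$ and $\int_{\mathbb{S}^1}e^{i\theta}d\rho_t(\theta)=0$ for a.e. $t\in[0,1]$. *)

theory Defs
  imports "HOL-Probability.Probability"
begin

text \<open>The circle S^1 is identified with [0,2 pi) inside the reals; the time-space
  cylinder [0,1] x S^1 with [0,1] x [0,2 pi) inside real x real.\<close>

definition circ :: "real set" where
  "circ = {0..<2*pi}"

definition cyl :: "(real \<times> real) set" where
  "cyl = {0..1} \<times> circ"

definition circle_measure :: "real measure \<Rightarrow> bool" where
  "circle_measure \<mu> \<longleftrightarrow> sets \<mu> = sets borel \<and> finite_measure \<mu> \<and>
     emeasure \<mu> (UNIV - circ) = 0"

definition M0plus :: "real measure \<Rightarrow> bool" where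
  "M0plus \<mu> \<longleftrightarrow> circle_measure \<mu> \<and> (LINT \<theta>|\<mu>. cis \<theta>) = 0"

text \<open>C^1 test functions on [0,1] x S^1, given as C^1 functions on R x R that are
  2 pi-periodic in the angular variable, with their (continuous) partial derivatives
  phit (in t) and phith (in theta).\<close>
definition C1_test ::
  "(real \<times> real \<Rightarrow> real) \<Rightarrow> (real \<times> real \<Rightarrow> real) \<Rightarrow> (real \<times> real \<Rightarrow> real) \<Rightarrow> bool" where
  "C1_test \<phi> \<phi>t \<phi>\<theta> \<longleftrightarrow>
     (\<forall>t \<theta>. \<phi> (t, \<theta> + 2*pi) = \<phi> (t, \<theta>)) \<and>
     continuous_on UNIV \<phi>t \<and> continuous_on UNIV \<phi>\<theta> \<and>
     (\<forall>t \<theta>. ((\<lambda>s. \<phi> (s, \<theta>)) has_real_derivative \<phi>t (t, \<theta>)) (at t)) \<and>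
     (\<forall>t \<theta>. ((\<lambda>s. \<phi> (t, s)) has_real_derivative \<phi>\<theta> (t, \<theta>)) (at \<theta>))"

text \<open>A pair nu = (rho, m) of finite signed Radon measures on [0,1] x S^1 is represented
  by a finite positive reference measure lam on the cylinder and densities d, v in
  L^1(lam): rho = d lam, m = v lam.  Every such pair arises this way (take
  lam = |rho| + |m|).\<close>
definition reference_measure :: "(real \<times> real) measure \<Rightarrow> bool" where
  "reference_measure lam \<longleftrightarrow> sets lam = sets borel \<and> finite_measure lam \<and>
     emeasure lam (UNIV - cyl) = 0"

definition continuity_eq ::
  "real measure \<Rightarrow> real measure \<Rightarrow> (real \<times> real) measure \<Rightarrow>
   (real \<times> real \<Rightarrow> real) \<Rightarrow> (real \<times> real \<Rightarrow> real) \<Rightarrow> bool" where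
  "continuity_eq \<mu>0 \<mu>1 lam d v \<longleftrightarrow>
     (\<forall>\<phi> \<phi>t \<phi>\<theta>. C1_test \<phi> \<phi>t \<phi>\<theta> \<longrightarrow>
        (LINT x|lam. \<phi>t x * d x) + (LINT x|lam. \<phi>\<theta> x * v x) =
        (LINT \<theta>|\<mu>1. \<phi> (1, \<theta>)) - (LINT \<theta>|\<mu>0. \<phi> (0, \<theta>)))"

text \<open>The constraint: int e^{i theta} d rho_t = 0 for a.e. t, expressed without the
  disintegration rho = rho_t (x) dt: for every Borel set A of times,
  int_{A x S^1} e^{i theta} d rho = 0.\<close>
definition moment_constraint ::
  "(real \<times> real) measure \<Rightarrow> (real \<times> real \<Rightarrow> real) \<Rightarrow> bool" where
  "moment_constraint lam d \<longleftrightarrow>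
     (\<forall>A \<in> sets (borel :: real measure).
        (LINT x|lam. complex_of_real (indicator A (fst x) * d x) * cis (snd x)) = 0)"

definition f_act :: "real \<Rightarrow> real \<Rightarrow> ennreal" where
  "f_act d m = (if d > 0 then ennreal (m\<^sup>2 / (2*d))
                else if d = 0 \<and> m = 0 then 0 else \<infinity>)"

definition action :: "(real \<times> real) measure \<Rightarrow> (real \<times> real \<Rightarrow> real) \<Rightarrow> (real \<times> real \<Rightarrow> real) \<Rightarrow> ennreal" where
  "action lam d v = (\<integral>\<^sup>+ x. f_act (d x) (v x) \<partial>lam)"

definition admissible ::
  "real measure \<Rightarrow> real measure \<Rightarrow> (real \<times> real) measure \<Rightarrow>
   (real \<times> real \<Rightarrow> real) \<Rightarrow> (real \<times> real \<Rightarrow> real) \<Rightarrow> bool" where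
  "admissible \<mu>0 \<mu>1 lam d v \<longleftrightarrow>
     reference_measure lam \<and> integrable lam d \<and> integrable lam v \<and>
     continuity_eq \<mu>0 \<mu>1 lam d v \<and> moment_constraint lam d"

definition constrained_W2 :: "real measure \<Rightarrow> real measure \<Rightarrow> ennreal" where
  "constrained_W2 \<mu>0 \<mu>1 = (INF p \<in> {(lam, d, v). admissible \<mu>0 \<mu>1 lam d v}.
      case p of (lam, d, v) \<Rightarrow> action lam d v)"

end

theory Submission
  imports Defs
begin


lemma C1_cont:
  assumes "C1_test \<phi> \<phi>t \<phi>\<theta>"
  shows "continuous_on UNIV \<phi>"
proof -
  have ct: "continuous_on UNIV \<phi>\<theta>" using assms unfolding C1_test_def by blast
  have dt: "\<And>t \<theta>. ((\<lambda>s. \<phi> (s, \<theta>)) has_real_derivative \<phi>t (t, \<theta>)) (at t)"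
   and dth: "\<And>t \<theta>. ((\<lambda>s. \<phi> (t, s)) has_real_derivative \<phi>\<theta> (t, \<theta>)) (at \<theta>)"
    using assms unfolding C1_test_def by blast+
  have "\<And>z. isCont \<phi> z"
  proof -
    fix z :: "real \<times> real"
    obtain x y where z: "z = (x,y)" by (cases z)
    have cc: "continuous (at (x, y) within UNIV \<times> UNIV) (\<lambda>(x, y). blinfun_mult_right (\<phi>\<theta> (x,y)))"
    proof -
      have "continuous_on UNIV (blinfun_mult_right \<circ> \<phi>\<theta>)"
        by (intro continuous_on_compose ct linear_continuous_on bounded_linear_blinfun_mult_right)
      then show ?thesis by (simp add: continuous_on_eq_continuous_at o_def case_prod_beta')
    qed
    have "((\<lambda>(x, y). \<phi> (x,y)) has_derivative (\<lambda>(tx, ty). \<phi>t (x,y) * tx + \<phi>\<theta> (x,y) * ty)) (at (x, y) within UNIV \<times> UNIV)"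
      apply (rule has_derivative_partialsI[where fx="\<lambda>tx. \<phi>t (x,y) * tx" and fy="\<lambda>x y. blinfun_mult_right (\<phi>\<theta> (x,y))", simplified])
      using dt[of y x] dth cc by (auto simp: has_field_derivative_def)
    then have "\<phi> differentiable (at (x,y))" unfolding differentiable_def by (auto simp: case_prod_beta')
    then show "isCont \<phi> z" using z differentiable_imp_continuous_within by blast
  qed
  then show ?thesis by (simp add: continuous_at_imp_continuous_on)
qed




lemma cont_bound:
  fixes f :: "'a::metric_space \<Rightarrow> 'b::real_normed_vector"
  assumes "continuous_on K f" "compact K"
  shows "\<exists>B. \<forall>x\<in>K. norm (f x) \<le> B"
  by (metis assms bounded_iff compact_continuous_image compact_imp_bounded imageI)

lemma prod_int:
  fixes f h :: "real \<Rightarrow> real"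
  assumes "integrable lborel f" "integrable lborel h"
  shows "integrable (lborel \<Otimes>\<^sub>M lborel) (\<lambda>x. f (fst x) * h (snd x))"
proof -
  have [measurable]: "f \<in> borel_measurable borel" "h \<in> borel_measurable borel"
    using assms by auto
  have "(\<integral>\<^sup>+ x. ennreal (norm (f (fst x) * h (snd x))) \<partial>(lborel \<Otimes>\<^sub>M lborel))
      = (\<integral>\<^sup>+ a. \<integral>\<^sup>+ b. ennreal (norm (f a)) * ennreal (norm (h b)) \<partial>lborel \<partial>lborel)"
    by (subst lborel.nn_integral_fst[symmetric]) (auto simp: abs_mult ennreal_mult)
  also have "\<dots> = (\<integral>\<^sup>+ a. ennreal (norm (f a)) * (\<integral>\<^sup>+ b. ennreal (norm (h b)) \<partial>lborel) \<partial>lborel)"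
    by (intro nn_integral_cong) (auto intro!: nn_integral_cmult)
  also have "\<dots> = (\<integral>\<^sup>+ a. ennreal (norm (f a)) \<partial>lborel) * (\<integral>\<^sup>+ b. ennreal (norm (h b)) \<partial>lborel)"
    by (rule nn_integral_multc) auto
  also have "\<dots> < \<infinity>"
    using assms by (auto simp: integrable_iff_bounded ennreal_mult_less_top)
  finally show ?thesis by (auto simp: integrable_iff_bounded)
qed

lemma time_lemma:
  fixes h h' :: "real \<Rightarrow> real"
  assumes hd: "\<And>t. (h has_real_derivative h' t) (at t)" and hc: "continuous_on UNIV h'"
  shows "(\<integral>t. indicator {0..1} t * ((1 - t) * h' t) \<partial>lborel) = (\<integral>t. indicator {0..1} t * h t \<partial>lborel) - h 0"
    and "(\<integral>t. indicator {0..1} t * (t * h' t) \<partial>lborel) = h 1 - (\<integral>t. indicator {0..1} t * h t \<partial>lborel)"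
proof -
  have hcont: "continuous_on UNIV h"
    using hd by (meson DERIV_isCont continuous_at_imp_continuous_on)
  have i1: "integrable lborel (\<lambda>t. indicator {0..1::real} t * h t)"
    using borel_integrable_atLeastAtMost'[of 0 1 h] hcont
    by (auto simp: set_integrable_def intro: continuous_on_subset)
  have i2: "integrable lborel (\<lambda>t. indicator {0..1::real} t * h' t)"
    using borel_integrable_atLeastAtMost'[of 0 1 h'] hc
    by (auto simp: set_integrable_def intro: continuous_on_subset)
  have i3: "integrable lborel (\<lambda>t. indicator {0..1::real} t * (t * h' t))"
  proof -
    have "continuous_on {0..1} (\<lambda>t. t * h' t)"
      using hc by (auto intro!: continuous_intros intro: continuous_on_subset)
    then show ?thesis using borel_integrable_atLeastAtMost'[of 0 1 "\<lambda>t. t * h' t"]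
      by (auto simp: set_integrable_def)
  qed
  have F1: "(\<integral>t. indicator {0..1::real} t *\<^sub>R (h t + t * h' t) \<partial>lborel) = 1 * h 1 - 0 * h 0"
    apply (rule integral_FTC_atLeastAtMost[where F="\<lambda>t. t * h t"])
      apply simp
     apply (rule has_vector_derivative_at_within, rule has_real_derivative_iff_has_vector_derivative[THEN iffD1])
     apply (rule derivative_eq_intros hd | simp)+
    using hc hcont by (auto intro!: continuous_intros intro: continuous_on_subset)
  have F2: "(\<integral>t. indicator {0..1::real} t *\<^sub>R h' t \<partial>lborel) = h 1 - h 0"
    apply (rule integral_FTC_atLeastAtMost)
      apply simp
     apply (rule has_vector_derivative_at_within, rule has_real_derivative_iff_has_vector_derivative[THEN iffD1])
     apply (rule hd)
    using hc by (auto intro: continuous_on_subset)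
  have e1: "(\<integral>t. indicator {0..1::real} t * h t \<partial>lborel) + (\<integral>t. indicator {0..1::real} t * (t * h' t) \<partial>lborel) = h 1"
    using F1 Bochner_Integration.integral_add[OF i1 i3] by (simp add: algebra_simps)
  then show "(\<integral>t. indicator {0..1} t * (t * h' t) \<partial>lborel) = h 1 - (\<integral>t. indicator {0..1} t * h t \<partial>lborel)"
    by simp
  have "(\<integral>t. indicator {0..1::real} t * ((1 - t) * h' t) \<partial>lborel)
     = (\<integral>t. indicator {0..1::real} t * h' t - indicator {0..1::real} t * (t * h' t) \<partial>lborel)"
    by (simp add: algebra_simps)
  also have "\<dots> = (h 1 - h 0) - (\<integral>t. indicator {0..1::real} t * (t * h' t) \<partial>lborel)"
    using Bochner_Integration.integral_diff[OF i2 i3] F2 by simp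
  finally show "(\<integral>t. indicator {0..1} t * ((1 - t) * h' t) \<partial>lborel) = (\<integral>t. indicator {0..1} t * h t \<partial>lborel) - h 0"
    using e1 by simp
qed




lemma circ_sets[measurable]: "circ \<in> sets borel" by (simp add: circ_def)
lemma circ_fin: "emeasure lborel circ < \<infinity>" by (simp add: circ_def)

lemma ibp:
  fixes \<psi> \<psi>' g :: "real \<Rightarrow> real"
  assumes psd: "\<And>x. (\<psi> has_real_derivative \<psi>' x) (at x)" and psc: "continuous_on UNIV \<psi>'"
    and per: "\<psi> (2*pi) = \<psi> 0"
    and gi: "integrable lborel g" and gz: "\<And>s. s \<notin> circ \<Longrightarrow> g s = 0"
    and g0: "(\<integral>s. g s \<partial>lborel) = 0"
  shows "(\<integral>\<theta>. indicator circ \<theta> * \<psi>' \<theta> * (\<integral>s. (if 0 \<le> s \<and> s \<le> \<theta> then g s else 0) \<partial>lborel) \<partial>lborel)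
         = - (\<integral>s. g s * \<psi> s \<partial>lborel)"
proof -
  have psic: "continuous_on UNIV \<psi>"
    using psd by (meson DERIV_isCont continuous_at_imp_continuous_on)
  have [measurable]: "g \<in> borel_measurable borel" "\<psi>' \<in> borel_measurable borel" "\<psi> \<in> borel_measurable borel"
    using gi psc psic by (auto intro: borel_measurable_continuous_onI)
  obtain B where B: "\<forall>x\<in>{0..2*pi}. norm (\<psi>' x) \<le> B"
    using cont_bound[of "{0..2*pi}" \<psi>'] psc by (auto intro: continuous_on_subset)
  obtain B0 where B0: "\<forall>x\<in>{0..2*pi}. norm (\<psi> x) \<le> B0"
    using cont_bound[of "{0..2*pi}" \<psi>] psic by (auto intro: continuous_on_subset)
  define F where "F \<theta> s = indicator circ \<theta> * \<psi>' \<theta> * (if 0 \<le> s \<and> s \<le> \<theta> then g s else 0)" for \<theta> s :: real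
  have intF: "integrable (lborel \<Otimes>\<^sub>M lborel) (\<lambda>(\<theta>, s). F \<theta> s)"
  proof (rule Bochner_Integration.integrable_bound[where f="\<lambda>x. (B * indicator circ (fst x)) * \<bar>g (snd x)\<bar>"])
    show "integrable (lborel \<Otimes>\<^sub>M lborel) (\<lambda>x. (B * indicator circ (fst x)) * \<bar>g (snd x)\<bar>)"
      by (rule prod_int) (auto intro!: integrable_mult_right gi circ_fin)
    show "(\<lambda>(\<theta>, s). F \<theta> s) \<in> borel_measurable (lborel \<Otimes>\<^sub>M lborel)"
      unfolding F_def by measurable
    show "AE x in lborel \<Otimes>\<^sub>M lborel. norm ((\<lambda>(\<theta>, s). F \<theta> s) x) \<le> norm (B * indicator circ (fst x) * \<bar>g (snd x)\<bar>)"
    proof (rule AE_I2)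
      fix x :: "real \<times> real"
      obtain \<theta> s where x: "x = (\<theta>, s)" by (cases x)
      have "\<bar>F \<theta> s\<bar> \<le> \<bar>B * indicator circ \<theta> * \<bar>g s\<bar>\<bar>"
      proof (cases "\<theta> \<in> circ")
        case True
        then have "\<bar>\<psi>' \<theta>\<bar> \<le> B" using B by (auto simp: circ_def)
        moreover have "\<bar>if 0 \<le> s \<and> s \<le> \<theta> then g s else 0\<bar> \<le> \<bar>g s\<bar>" by auto
        ultimately show ?thesis using True unfolding F_def
          by (auto simp: abs_mult intro!: mult_mono)
      qed (simp add: F_def)
      then show "norm ((\<lambda>(\<theta>, s). F \<theta> s) x) \<le> norm (B * indicator circ (fst x) * \<bar>g (snd x)\<bar>)"
        using x by simp
    qed
  qed
  have s1: "(\<integral>\<theta>. indicator circ \<theta> * \<psi>' \<theta> * (\<integral>s. (if 0 \<le> s \<and> s \<le> \<theta> then g s else 0) \<partial>lborel) \<partial>lborel)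
      = (\<integral>\<theta>. (\<integral>s. F \<theta> s \<partial>lborel) \<partial>lborel)"
    unfolding F_def by simp
  also have "\<dots> = (\<integral>s. (\<integral>\<theta>. F \<theta> s \<partial>lborel) \<partial>lborel)"
    using lborel_pair.Fubini_integral[OF intF] by simp
  also have "\<dots> = (\<integral>s. g s * (\<psi> 0 - \<psi> s) \<partial>lborel)"
  proof (rule Bochner_Integration.integral_cong[OF refl])
    fix s :: real
    show "(\<integral>\<theta>. F \<theta> s \<partial>lborel) = g s * (\<psi> 0 - \<psi> s)"
    proof (cases "s \<in> circ")
      case False
      have "g s = 0" using gz[OF False] .
      then have "\<And>\<theta>. F \<theta> s = 0" by (simp add: F_def)
      then show ?thesis using \<open>g s = 0\<close> by simp
    next
      case True
      then have s: "0 \<le> s" "s < 2*pi" by (auto simp: circ_def)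
      have "(\<integral>\<theta>. F \<theta> s \<partial>lborel) = (\<integral>\<theta>. g s * (indicator {s..2*pi} \<theta> *\<^sub>R \<psi>' \<theta>) \<partial>lborel)"
      proof (rule integral_cong_AE)
        show "AE \<theta> in lborel. F \<theta> s = g s * (indicator {s..2*pi} \<theta> *\<^sub>R \<psi>' \<theta>)"
          using AE_lborel_singleton[of "2*pi"]
        proof (rule AE_mp, intro AE_I2 impI)
          fix \<theta> :: real assume "\<theta> \<noteq> 2*pi"
          then show "F \<theta> s = g s * (indicator {s..2*pi} \<theta> *\<^sub>R \<psi>' \<theta>)"
            using s by (auto simp: F_def circ_def indicator_def)
        qed
      qed (auto simp: F_def)
      also have "\<dots> = g s * (\<psi> (2*pi) - \<psi> s)"
        apply (subst integral_mult_right_zero)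
        apply (subst integral_FTC_atLeastAtMost[where F=\<psi>])
        using s apply simp
          apply (rule has_vector_derivative_at_within, rule has_real_derivative_iff_has_vector_derivative[THEN iffD1])
          apply (rule psd)
        using psc apply (auto intro: continuous_on_subset)
        done
      finally show ?thesis using per by simp
    qed
  qed
  also have "\<dots> = (\<integral>s. \<psi> 0 * g s - g s * \<psi> s \<partial>lborel)"
    by (simp add: algebra_simps)
  also have "\<dots> = \<psi> 0 * (\<integral>s. g s \<partial>lborel) - (\<integral>s. g s * \<psi> s \<partial>lborel)"
  proof (rule trans[OF Bochner_Integration.integral_diff])
    show "integrable lborel (\<lambda>s. \<psi> 0 * g s)" using gi by auto
    show "integrable lborel (\<lambda>s. g s * \<psi> s)"
    proof (rule Bochner_Integration.integrable_bound[where f="\<lambda>s. B0 * g s"])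
      show "integrable lborel (\<lambda>s. B0 * g s)" using gi by auto
      show "AE x in lborel. norm (g x * \<psi> x) \<le> norm (B0 * g x)"
      proof (rule AE_I2)
        fix x
        show "norm (g x * \<psi> x) \<le> norm (B0 * g x)"
        proof (cases "x \<in> circ")
          case True
          then have "\<bar>\<psi> x\<bar> \<le> B0" using B0 by (auto simp: circ_def)
          then have "\<bar>\<psi> x\<bar> * \<bar>g x\<bar> \<le> B0 * \<bar>g x\<bar>" by (rule mult_right_mono) auto
          moreover have "B0 * \<bar>g x\<bar> \<le> \<bar>B0\<bar> * \<bar>g x\<bar>" by (rule mult_right_mono) auto
          ultimately show ?thesis by (simp add: abs_mult mult.commute)
        qed (simp add: gz)
      qed
    qed measurable
  qed simp
  finally show ?thesis using g0 by simp
qed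




lemma cont_pair1: "continuous_on UNIV f \<Longrightarrow> continuous_on UNIV (\<lambda>t. f (t, \<theta>))"
  by (rule continuous_on_compose2[of UNIV f]) (auto intro!: continuous_intros)
lemma cont_pair2: "continuous_on UNIV f \<Longrightarrow> continuous_on UNIV (\<lambda>s. f (t, s))"
  by (rule continuous_on_compose2[of UNIV f]) (auto intro!: continuous_intros)

lemma ind_cont_int:
  fixes f :: "real \<Rightarrow> real"
  shows "continuous_on UNIV f \<Longrightarrow> integrable lborel (\<lambda>t. indicator {a..b} t * f t)"
  using borel_integrable_atLeastAtMost'[of a b f] by (auto simp: set_integrable_def intro: continuous_on_subset)

lemma supp_int:
  fixes r h :: "real \<Rightarrow> real"
  assumes "integrable lborel r" "\<And>s. s \<notin> circ \<Longrightarrow> r s = 0" "h \<in> borel_measurable borel"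
    "\<And>s. s \<in> circ \<Longrightarrow> \<bar>h s\<bar> \<le> B"
  shows "integrable lborel (\<lambda>s. r s * h s)"
proof (rule Bochner_Integration.integrable_bound[where f="\<lambda>s. B * r s"])
  show "integrable lborel (\<lambda>s. B * r s)" using assms by auto
  show "AE x in lborel. norm (r x * h x) \<le> norm (B * r x)"
  proof (rule AE_I2)
    fix x
    show "norm (r x * h x) \<le> norm (B * r x)"
    proof (cases "x \<in> circ")
      case True
      then have "\<bar>h x\<bar> \<le> B" using assms by auto
      then have "\<bar>h x\<bar> * \<bar>r x\<bar> \<le> B * \<bar>r x\<bar>" by (rule mult_right_mono) auto
      moreover have "B * \<bar>r x\<bar> \<le> \<bar>B\<bar> * \<bar>r x\<bar>" by (rule mult_right_mono) auto
      ultimately show ?thesis by (simp add: abs_mult mult.commute)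
    qed (simp add: assms)
  qed
  show "(\<lambda>s. r s * h s) \<in> borel_measurable lborel" using assms by auto
qed




lemma core:
  fixes r0 r1 :: "real \<Rightarrow> real" and \<phi> \<phi>t \<phi>\<theta> :: "real \<times> real \<Rightarrow> real"
  assumes r0i: "integrable lborel r0" and r1i: "integrable lborel r1"
    and r0z: "\<And>s. s \<notin> circ \<Longrightarrow> r0 s = 0" and r1z: "\<And>s. s \<notin> circ \<Longrightarrow> r1 s = 0"
    and req: "(\<integral>s. r0 s \<partial>lborel) = (\<integral>s. r1 s \<partial>lborel)"
    and C1: "C1_test \<phi> \<phi>t \<phi>\<theta>"
  defines "g \<equiv> \<lambda>s. r1 s - r0 s"
  defines "G \<equiv> \<lambda>\<theta>. \<integral>s. (if 0 \<le> s \<and> s \<le> \<theta> then g s else 0) \<partial>lborel"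
  shows "(\<integral>x. indicator cyl x * (\<phi>t x * ((1 - fst x) * r0 (snd x) + fst x * r1 (snd x))) \<partial>(lborel \<Otimes>\<^sub>M lborel))
       + (\<integral>x. indicator cyl x * (\<phi>\<theta> x * - G (snd x)) \<partial>(lborel \<Otimes>\<^sub>M lborel))
       = (\<integral>\<theta>. r1 \<theta> * \<phi> (1, \<theta>) \<partial>lborel) - (\<integral>\<theta>. r0 \<theta> * \<phi> (0, \<theta>) \<partial>lborel)"
proof -
  have per: "\<And>t \<theta>. \<phi> (t, \<theta> + 2*pi) = \<phi> (t, \<theta>)" and ct: "continuous_on UNIV \<phi>t"
    and cth: "continuous_on UNIV \<phi>\<theta>"
    and dt: "\<And>t \<theta>. ((\<lambda>s. \<phi> (s, \<theta>)) has_real_derivative \<phi>t (t, \<theta>)) (at t)"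
    and dth: "\<And>t \<theta>. ((\<lambda>s. \<phi> (t, s)) has_real_derivative \<phi>\<theta> (t, \<theta>)) (at \<theta>)"
    using C1 unfolding C1_test_def by blast+
  have cp: "continuous_on UNIV \<phi>" by (rule C1_cont[OF C1])
  have [measurable]: "\<phi> \<in> borel_measurable borel" "\<phi>t \<in> borel_measurable borel" "\<phi>\<theta> \<in> borel_measurable borel"
    using cp ct cth by (auto intro: borel_measurable_continuous_onI)
  have [measurable]: "r0 \<in> borel_measurable borel" "r1 \<in> borel_measurable borel" "g \<in> borel_measurable borel"
    using r0i r1i unfolding g_def by (auto simp del: borel_measurable_diff intro!: borel_measurable_diff)
  have gi: "integrable lborel g" unfolding g_def using r0i r1i by auto
  have gz: "\<And>s. s \<notin> circ \<Longrightarrow> g s = 0" unfolding g_def using r0z r1z by auto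
  have g0: "(\<integral>s. g s \<partial>lborel) = 0" unfolding g_def using r0i r1i req by simp
  have [measurable]: "G \<in> borel_measurable borel" unfolding G_def by measurable
  have Kc: "compact ({0..1} \<times> {0..2*pi} :: (real \<times> real) set)" by (intro compact_Times compact_Icc)
  obtain Bt where Bt: "\<forall>x\<in>{0..1} \<times> {0..2*pi}. norm (\<phi>t x) \<le> Bt"
    using cont_bound[OF continuous_on_subset[OF ct subset_UNIV] Kc] by blast
  obtain Bth where Bth: "\<forall>x\<in>{0..1} \<times> {0..2*pi}. norm (\<phi>\<theta> x) \<le> Bth"
    using cont_bound[OF continuous_on_subset[OF cth subset_UNIV] Kc] by blast
  obtain Bp where Bp: "\<forall>x\<in>{0..1} \<times> {0..2*pi}. norm (\<phi> x) \<le> Bp"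
    using cont_bound[OF continuous_on_subset[OF cp subset_UNIV] Kc] by blast
  define K where "K = (\<integral>s. \<bar>g s\<bar> \<partial>lborel)"
  have GK: "\<bar>G \<theta>\<bar> \<le> K" for \<theta>
  proof -
    have ii: "integrable lborel (\<lambda>s. if 0 \<le> s \<and> s \<le> \<theta> then g s else 0)"
      apply (rule Bochner_Integration.integrable_bound[where f=g])
        apply (rule gi)
       apply measurable
      done
    have "\<bar>G \<theta>\<bar> \<le> (\<integral>s. norm (if 0 \<le> s \<and> s \<le> \<theta> then g s else 0) \<partial>lborel)"
      unfolding G_def real_norm_def[symmetric] by (rule integral_norm_bound)
    also have "\<dots> \<le> K" unfolding K_def
      by (rule integral_mono[OF integrable_norm[OF ii] integrable_abs[OF gi]]) auto
    finally show ?thesis .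
  qed
  have K0: "0 \<le> K" using GK[of 0] by linarith
  have [measurable]: "\<phi> \<in> borel_measurable (lborel \<Otimes>\<^sub>M lborel)"
    "\<phi>t \<in> borel_measurable (lborel \<Otimes>\<^sub>M lborel)" "\<phi>\<theta> \<in> borel_measurable (lborel \<Otimes>\<^sub>M lborel)"
    by (simp_all add: lborel_prod)
  have i01: "integrable lborel (indicator {0..1::real} :: real \<Rightarrow> real)" by simp
  have icirc: "integrable lborel (indicator circ :: real \<Rightarrow> real)" using circ_fin by simp
  have cylI: "indicator cyl x = indicator {0..1::real} (fst x) * (indicator circ (snd x) :: real)" for x
    by (cases x) (auto simp: cyl_def indicator_def)
  define \<Psi> where "\<Psi> \<theta> = (\<integral>t. indicator {0..1} t * \<phi> (t, \<theta>) \<partial>lborel)" for \<theta>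
  define F3 where "F3 t s = indicator {0..1} t * (g s * \<phi> (t, s))" for t s :: real
  have int3: "integrable (lborel \<Otimes>\<^sub>M lborel) (\<lambda>(t, s). F3 t s)"
  proof (rule Bochner_Integration.integrable_bound[where f="\<lambda>x. (Bp * indicator {0..1::real} (fst x)) * \<bar>g (snd x)\<bar>"])
    show "integrable (lborel \<Otimes>\<^sub>M lborel) (\<lambda>x. (Bp * indicator {0..1::real} (fst x)) * \<bar>g (snd x)\<bar>)"
    proof -
      have a: "integrable lborel (\<lambda>t. Bp * indicator {0..1::real} t :: real)" by simp
      have b: "integrable lborel (\<lambda>s. \<bar>g s\<bar>)" using gi by simp
      show ?thesis using prod_int[OF a b] by simp
    qed
    show "(\<lambda>(t, s). F3 t s) \<in> borel_measurable (lborel \<Otimes>\<^sub>M lborel)"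
      unfolding F3_def by measurable
    show "AE x in lborel \<Otimes>\<^sub>M lborel. norm ((\<lambda>(t, s). F3 t s) x) \<le> norm ((Bp * indicator {0..1::real} (fst x)) * \<bar>g (snd x)\<bar>)"
    proof (rule AE_I2, clarsimp)
      fix t s :: real
      show "\<bar>F3 t s\<bar> \<le> \<bar>Bp * indicator {0..1} t * \<bar>g s\<bar>\<bar>"
      proof (cases "t \<in> {0..1} \<and> s \<in> circ")
        case True
        then have "\<bar>\<phi> (t, s)\<bar> \<le> Bp" using Bp by (auto simp: circ_def)
        then have "\<bar>\<phi> (t, s)\<bar> * \<bar>g s\<bar> \<le> Bp * \<bar>g s\<bar>" by (rule mult_right_mono) auto
        moreover have "Bp * \<bar>g s\<bar> \<le> \<bar>Bp\<bar> * \<bar>g s\<bar>" by (rule mult_right_mono) auto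
        ultimately show ?thesis using True by (simp add: F3_def abs_mult mult.commute)
      next
        case False
        then show ?thesis by (auto simp: F3_def gz)
      qed
    qed
  qed
  have gPsi: "integrable lborel (\<lambda>s. g s * \<Psi> s)"
  proof -
    have "integrable lborel (\<lambda>s. \<integral>t. F3 t s \<partial>lborel)"
      using lborel_pair.integrable_snd[OF int3] .
    moreover have "(\<integral>t. F3 t s \<partial>lborel) = g s * \<Psi> s" for s
      unfolding F3_def \<Psi>_def by (simp add: mult.left_commute)
    ultimately show ?thesis by simp
  qed
  have E3: "(\<integral>t. indicator {0..1} t * (\<integral>s. g s * \<phi> (t, s) \<partial>lborel) \<partial>lborel) = (\<integral>s. g s * \<Psi> s \<partial>lborel)"
  proof -
    have "(\<integral>t. indicator {0..1} t * (\<integral>s. g s * \<phi> (t, s) \<partial>lborel) \<partial>lborel) = (\<integral>t. (\<integral>s. F3 t s \<partial>lborel) \<partial>lborel)"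
      unfolding F3_def by simp
    also have "\<dots> = (\<integral>s. (\<integral>t. F3 t s \<partial>lborel) \<partial>lborel)"
      using lborel_pair.Fubini_integral[OF int3] by simp
    also have "\<dots> = (\<integral>s. g s * \<Psi> s \<partial>lborel)"
      unfolding F3_def \<Psi>_def by (simp add: mult.left_commute)
    finally show ?thesis .
  qed
  define F2 where "F2 t \<theta> = indicator {0..1} t * indicator circ \<theta> * (\<phi>\<theta> (t, \<theta>) * - G \<theta>)" for t \<theta> :: real
  have int2: "integrable (lborel \<Otimes>\<^sub>M lborel) (\<lambda>(t, \<theta>). F2 t \<theta>)"
  proof (rule Bochner_Integration.integrable_bound[where f="\<lambda>x. (Bth * K * indicator {0..1::real} (fst x)) * indicator circ (snd x)"])
    show "integrable (lborel \<Otimes>\<^sub>M lborel) (\<lambda>x. (Bth * K * indicator {0..1::real} (fst x)) * indicator circ (snd x))"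
    proof -
      have a: "integrable lborel (\<lambda>t. Bth * K * indicator {0..1::real} t :: real)" by simp
      show ?thesis using prod_int[OF a icirc] by simp
    qed
    show "(\<lambda>(t, \<theta>). F2 t \<theta>) \<in> borel_measurable (lborel \<Otimes>\<^sub>M lborel)"
      unfolding F2_def by measurable
    show "AE x in lborel \<Otimes>\<^sub>M lborel. norm ((\<lambda>(t, \<theta>). F2 t \<theta>) x) \<le> norm ((Bth * K * indicator {0..1::real} (fst x)) * indicator circ (snd x))"
    proof (rule AE_I2, clarsimp)
      fix t s :: real
      show "\<bar>F2 t s\<bar> \<le> \<bar>Bth * K * indicator {0..1} t * indicator circ s\<bar>"
      proof (cases "t \<in> {0..1} \<and> s \<in> circ")
        case True
        then have "\<bar>\<phi>\<theta> (t, s)\<bar> \<le> Bth" using Bth by (auto simp: circ_def)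
        then have "\<bar>\<phi>\<theta> (t, s)\<bar> * \<bar>G s\<bar> \<le> Bth * K" using GK[of s] by (intro mult_mono) auto
        moreover have "Bth * K \<le> \<bar>Bth\<bar> * \<bar>K\<bar>" by (simp add: abs_mult[symmetric])
        ultimately show ?thesis using True by (simp add: F2_def abs_mult)
      next
        case False
        then show ?thesis by (auto simp: F2_def)
      qed
    qed
  qed
  have T2: "(\<integral>x. indicator cyl x * (\<phi>\<theta> x * - G (snd x)) \<partial>(lborel \<Otimes>\<^sub>M lborel)) = (\<integral>s. g s * \<Psi> s \<partial>lborel)"
  proof -
    have "(\<integral>x. indicator cyl x * (\<phi>\<theta> x * - G (snd x)) \<partial>(lborel \<Otimes>\<^sub>M lborel)) = integral\<^sup>L (lborel \<Otimes>\<^sub>M lborel) (\<lambda>(t, \<theta>). F2 t \<theta>)"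
      by (rule Bochner_Integration.integral_cong) (auto simp: cylI F2_def)
    also have "\<dots> = (\<integral>t. (\<integral>\<theta>. F2 t \<theta> \<partial>lborel) \<partial>lborel)"
      using lborel_pair.integral_fst[OF int2] by simp
    also have "\<dots> = (\<integral>t. indicator {0..1} t * (\<integral>s. g s * \<phi> (t, s) \<partial>lborel) \<partial>lborel)"
    proof (rule Bochner_Integration.integral_cong[OF refl])
      fix t :: real
      have "(\<integral>\<theta>. F2 t \<theta> \<partial>lborel) = (- indicator {0..1} t) * (\<integral>\<theta>. indicator circ \<theta> * \<phi>\<theta> (t, \<theta>) * G \<theta> \<partial>lborel)"
      proof -
        have "F2 t \<theta> = (- indicator {0..1} t) * (indicator circ \<theta> * \<phi>\<theta> (t, \<theta>) * G \<theta>)" for \<theta>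
          by (simp add: F2_def)
        then show ?thesis by (simp only: integral_mult_right_zero)
      qed
      also have "(\<integral>\<theta>. indicator circ \<theta> * \<phi>\<theta> (t, \<theta>) * G \<theta> \<partial>lborel) = - (\<integral>s. g s * \<phi> (t, s) \<partial>lborel)"
        unfolding G_def
      proof (rule ibp[OF _ _ _ gi gz g0])
        show "\<And>x. ((\<lambda>s. \<phi> (t, s)) has_real_derivative \<phi>\<theta> (t, x)) (at x)" using dth by blast
        show "continuous_on UNIV (\<lambda>s. \<phi>\<theta> (t, s))" by (rule cont_pair2[OF cth])
        show "\<phi> (t, 2 * pi) = \<phi> (t, 0)" using per[of t 0] by simp
      qed
      finally show "(\<integral>\<theta>. F2 t \<theta> \<partial>lborel) = indicator {0..1} t * (\<integral>s. g s * \<phi> (t, s) \<partial>lborel)" by simp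
    qed
    also have "\<dots> = (\<integral>s. g s * \<Psi> s \<partial>lborel)" by (rule E3)
    finally show ?thesis .
  qed
  define F1 where "F1 t \<theta> = indicator {0..1} t * (\<phi>t (t, \<theta>) * ((1 - t) * r0 \<theta> + t * r1 \<theta>))" for t \<theta> :: real
  have int1: "integrable (lborel \<Otimes>\<^sub>M lborel) (\<lambda>(t, \<theta>). F1 t \<theta>)"
  proof (rule Bochner_Integration.integrable_bound[where f="\<lambda>x. (Bt * indicator {0..1::real} (fst x)) * (\<bar>r0 (snd x)\<bar> + \<bar>r1 (snd x)\<bar>)"])
    show "integrable (lborel \<Otimes>\<^sub>M lborel) (\<lambda>x. (Bt * indicator {0..1::real} (fst x)) * (\<bar>r0 (snd x)\<bar> + \<bar>r1 (snd x)\<bar>))"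
    proof -
      have a: "integrable lborel (\<lambda>t. Bt * indicator {0..1::real} t :: real)" by simp
      have b: "integrable lborel (\<lambda>s. \<bar>r0 s\<bar> + \<bar>r1 s\<bar>)" using r0i r1i by simp
      show ?thesis using prod_int[OF a b] by simp
    qed
    show "(\<lambda>(t, \<theta>). F1 t \<theta>) \<in> borel_measurable (lborel \<Otimes>\<^sub>M lborel)"
      unfolding F1_def by measurable
    show "AE x in lborel \<Otimes>\<^sub>M lborel. norm ((\<lambda>(t, \<theta>). F1 t \<theta>) x) \<le> norm ((Bt * indicator {0..1::real} (fst x)) * (\<bar>r0 (snd x)\<bar> + \<bar>r1 (snd x)\<bar>))"
    proof (rule AE_I2, clarsimp)
      fix t s :: real
      show "\<bar>F1 t s\<bar> \<le> \<bar>Bt * indicator {0..1} t * (\<bar>r0 s\<bar> + \<bar>r1 s\<bar>)\<bar>"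
      proof (cases "t \<in> {0..1} \<and> s \<in> circ")
        case True
        then have "\<bar>\<phi>t (t, s)\<bar> \<le> Bt" using Bt by (auto simp: circ_def)
        moreover have "\<bar>(1 - t) * r0 s + t * r1 s\<bar> \<le> \<bar>r0 s\<bar> + \<bar>r1 s\<bar>"
        proof -
          have "\<bar>(1 - t) * r0 s\<bar> \<le> \<bar>r0 s\<bar>" using True by (auto simp: abs_mult intro!: mult_left_le_one_le)
          moreover have "\<bar>t * r1 s\<bar> \<le> \<bar>r1 s\<bar>" using True by (auto simp: abs_mult intro!: mult_left_le_one_le)
          ultimately show ?thesis by (smt (verit))
        qed
        ultimately have "\<bar>\<phi>t (t, s)\<bar> * \<bar>(1 - t) * r0 s + t * r1 s\<bar> \<le> Bt * (\<bar>r0 s\<bar> + \<bar>r1 s\<bar>)"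
          by (intro mult_mono) auto
        moreover have "Bt * (\<bar>r0 s\<bar> + \<bar>r1 s\<bar>) \<le> \<bar>Bt * (\<bar>r0 s\<bar> + \<bar>r1 s\<bar>)\<bar>" by simp
        ultimately show ?thesis using True by (simp add: F1_def abs_mult)
      next
        case False
        then show ?thesis by (auto simp: F1_def r0z r1z)
      qed
    qed
  qed
  have T1: "(\<integral>x. indicator cyl x * (\<phi>t x * ((1 - fst x) * r0 (snd x) + fst x * r1 (snd x))) \<partial>(lborel \<Otimes>\<^sub>M lborel))
     = (\<integral>\<theta>. r1 \<theta> * \<phi> (1, \<theta>) - r0 \<theta> * \<phi> (0, \<theta>) - g \<theta> * \<Psi> \<theta> \<partial>lborel)"
  proof -
    have "(\<integral>x. indicator cyl x * (\<phi>t x * ((1 - fst x) * r0 (snd x) + fst x * r1 (snd x))) \<partial>(lborel \<Otimes>\<^sub>M lborel))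
        = integral\<^sup>L (lborel \<Otimes>\<^sub>M lborel) (\<lambda>(t, \<theta>). F1 t \<theta>)"
    proof (rule Bochner_Integration.integral_cong[OF refl])
      fix x :: "real \<times> real"
      obtain t \<theta> where x: "x = (t, \<theta>)" by (cases x)
      show "indicator cyl x * (\<phi>t x * ((1 - fst x) * r0 (snd x) + fst x * r1 (snd x))) = (\<lambda>(t, \<theta>). F1 t \<theta>) x"
        unfolding x by (cases "\<theta> \<in> circ") (simp_all add: cylI F1_def r0z r1z)
    qed
    also have "\<dots> = (\<integral>\<theta>. (\<integral>t. F1 t \<theta> \<partial>lborel) \<partial>lborel)"
      using lborel_pair.integral_snd[OF int1] by simp
    also have "\<dots> = (\<integral>\<theta>. r1 \<theta> * \<phi> (1, \<theta>) - r0 \<theta> * \<phi> (0, \<theta>) - g \<theta> * \<Psi> \<theta> \<partial>lborel)"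
    proof (rule Bochner_Integration.integral_cong[OF refl])
      fix \<theta> :: real
      have hd: "\<And>t. ((\<lambda>s. \<phi> (s, \<theta>)) has_real_derivative \<phi>t (t, \<theta>)) (at t)" using dt by blast
      have hc: "continuous_on UNIV (\<lambda>t. \<phi>t (t, \<theta>))" by (rule cont_pair1[OF ct])
      note TL = time_lemma[OF hd hc]
      have ia: "integrable lborel (\<lambda>t. indicator {0..1} t * ((1 - t) * \<phi>t (t, \<theta>)))"
        by (rule ind_cont_int) (auto intro!: continuous_intros hc)
      have ib: "integrable lborel (\<lambda>t. indicator {0..1} t * (t * \<phi>t (t, \<theta>)))"
        by (rule ind_cont_int) (auto intro!: continuous_intros hc)
      have "(\<integral>t. F1 t \<theta> \<partial>lborel) = (\<integral>t. r0 \<theta> * (indicator {0..1} t * ((1 - t) * \<phi>t (t, \<theta>)))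
                 + r1 \<theta> * (indicator {0..1} t * (t * \<phi>t (t, \<theta>))) \<partial>lborel)"
        unfolding F1_def by (simp add: algebra_simps)
      also have "\<dots> = r0 \<theta> * (\<integral>t. indicator {0..1} t * ((1 - t) * \<phi>t (t, \<theta>)) \<partial>lborel)
                 + r1 \<theta> * (\<integral>t. indicator {0..1} t * (t * \<phi>t (t, \<theta>)) \<partial>lborel)"
        using ia ib by simp
      also have "\<dots> = r1 \<theta> * \<phi> (1, \<theta>) - r0 \<theta> * \<phi> (0, \<theta>) - g \<theta> * \<Psi> \<theta>"
        unfolding TL \<Psi>_def g_def by (simp add: algebra_simps)
      finally show "(\<integral>t. F1 t \<theta> \<partial>lborel) = r1 \<theta> * \<phi> (1, \<theta>) - r0 \<theta> * \<phi> (0, \<theta>) - g \<theta> * \<Psi> \<theta>" .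
    qed
    finally show ?thesis .
  qed
  have i1: "integrable lborel (\<lambda>\<theta>. r1 \<theta> * \<phi> (1, \<theta>))"
  proof (rule supp_int[OF r1i r1z])
    show "(\<lambda>\<theta>. \<phi> (1, \<theta>)) \<in> borel_measurable borel"
      by (rule borel_measurable_continuous_onI[OF cont_pair2[OF cp]])
    show "\<And>s. s \<in> circ \<Longrightarrow> \<bar>\<phi> (1, s)\<bar> \<le> Bp" using Bp by (auto simp: circ_def)
  qed
  have i0: "integrable lborel (\<lambda>\<theta>. r0 \<theta> * \<phi> (0, \<theta>))"
  proof (rule supp_int[OF r0i r0z])
    show "(\<lambda>\<theta>. \<phi> (0, \<theta>)) \<in> borel_measurable borel"
      by (rule borel_measurable_continuous_onI[OF cont_pair2[OF cp]])
    show "\<And>s. s \<in> circ \<Longrightarrow> \<bar>\<phi> (0, s)\<bar> \<le> Bp" using Bp by (auto simp: circ_def)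
  qed
  show ?thesis
    unfolding T1 T2 using i0 i1 gPsi by simp
qed




lemma G_facts:
  fixes g :: "real \<Rightarrow> real"
  assumes gi: "integrable lborel g"
  defines "G \<equiv> \<lambda>\<theta>. \<integral>s. (if 0 \<le> s \<and> s \<le> \<theta> then g s else 0) \<partial>lborel"
  shows "G \<in> borel_measurable borel" "\<bar>G \<theta>\<bar> \<le> (\<integral>s. \<bar>g s\<bar> \<partial>lborel)"
proof -
  have [measurable]: "g \<in> borel_measurable borel" using gi by auto
  show "G \<in> borel_measurable borel" unfolding G_def by measurable
  have ii: "integrable lborel (\<lambda>s. if 0 \<le> s \<and> s \<le> \<theta> then g s else 0)"
    apply (rule Bochner_Integration.integrable_bound[where f=g])
     apply (rule gi)
    apply measurable
    done
  have "\<bar>G \<theta>\<bar> \<le> (\<integral>s. norm (if 0 \<le> s \<and> s \<le> \<theta> then g s else 0) \<partial>lborel)"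
    unfolding G_def real_norm_def[symmetric] by (rule integral_norm_bound)
  also have "\<dots> \<le> (\<integral>s. \<bar>g s\<bar> \<partial>lborel)"
    by (rule integral_mono[OF integrable_norm[OF ii] integrable_abs[OF gi]]) auto
  finally show "\<bar>G \<theta>\<bar> \<le> (\<integral>s. \<bar>g s\<bar> \<partial>lborel)" .
qed

lemma cyl_sets[measurable]: "cyl \<in> sets (lborel \<Otimes>\<^sub>M lborel)"
  unfolding cyl_def by (intro pair_measureI) auto

lemma cyl_meas: "emeasure (lborel \<Otimes>\<^sub>M lborel) cyl = ennreal (2*pi)"
  unfolding cyl_def by (subst lborel.emeasure_pair_measure_Times) (auto simp: circ_def)

lemma sets_lb2: "sets (lborel \<Otimes>\<^sub>M lborel :: (real \<times> real) measure) = sets borel"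
  by (metis lborel_prod sets_lborel)

theorem proposition5p5:
  fixes \<rho>0 \<rho>1 :: "real \<Rightarrow> real" and c :: real and \<mu>0 \<mu>1 :: "real measure"
  assumes "set_integrable lborel circ \<rho>0" and "set_integrable lborel circ \<rho>1"
    and "\<mu>0 = density lborel (\<lambda>\<theta>. ennreal (indicator circ \<theta> * \<rho>0 \<theta>))"
    and "\<mu>1 = density lborel (\<lambda>\<theta>. ennreal (indicator circ \<theta> * \<rho>1 \<theta>))"
    and "prob_space \<mu>0" and "prob_space \<mu>1"
    and "M0plus \<mu>0" and "M0plus \<mu>1"
    and "c > 0"
    and "AE \<theta> in lborel. \<theta> \<in> circ \<longrightarrow> \<rho>0 \<theta> \<ge> c"
    and "AE \<theta> in lborel. \<theta> \<in> circ \<longrightarrow> \<rho>1 \<theta> \<ge> c"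
  shows "constrained_W2 \<mu>0 \<mu>1 < \<infinity>"
proof -
  define r0 where "r0 \<theta> = indicator circ \<theta> * \<rho>0 \<theta>" for \<theta>
  define r1 where "r1 \<theta> = indicator circ \<theta> * \<rho>1 \<theta>" for \<theta>
  have r0i: "integrable lborel r0" using assms(1) unfolding set_integrable_def r0_def by simp
  have r1i: "integrable lborel r1" using assms(2) unfolding set_integrable_def r1_def by simp
  have r0z: "\<And>s. s \<notin> circ \<Longrightarrow> r0 s = 0" by (simp add: r0_def)
  have r1z: "\<And>s. s \<notin> circ \<Longrightarrow> r1 s = 0" by (simp add: r1_def)
  have [measurable]: "r0 \<in> borel_measurable borel" "r1 \<in> borel_measurable borel"
    using r0i r1i by auto
  have AE0: "AE \<theta> in lborel. \<theta> \<in> circ \<longrightarrow> r0 \<theta> \<ge> c"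
    using assms(10) by eventually_elim (auto simp: r0_def)
  have AE1: "AE \<theta> in lborel. \<theta> \<in> circ \<longrightarrow> r1 \<theta> \<ge> c"
    using assms(11) by eventually_elim (auto simp: r1_def)
  have nn0: "AE \<theta> in lborel. 0 \<le> r0 \<theta>"
    using AE0 by eventually_elim (use assms(9) r0z in \<open>fastforce\<close>)
  have nn1: "AE \<theta> in lborel. 0 \<le> r1 \<theta>"
    using AE1 by eventually_elim (use assms(9) r1z in \<open>fastforce\<close>)
  have mu0: "\<mu>0 = density lborel (\<lambda>\<theta>. ennreal (r0 \<theta>))" by (simp add: assms(3) r0_def)
  have mu1: "\<mu>1 = density lborel (\<lambda>\<theta>. ennreal (r1 \<theta>))" by (simp add: assms(4) r1_def)
  have tr0: "(\<integral>\<theta>. h \<theta> \<partial>\<mu>0) = (\<integral>\<theta>. r0 \<theta> *\<^sub>R h \<theta> \<partial>lborel)"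
    if "h \<in> borel_measurable borel" for h :: "real \<Rightarrow> 'b::{banach, second_countable_topology}"
    unfolding mu0 by (rule integral_density) (use that nn0 in auto)
  have tr1: "(\<integral>\<theta>. h \<theta> \<partial>\<mu>1) = (\<integral>\<theta>. r1 \<theta> *\<^sub>R h \<theta> \<partial>lborel)"
    if "h \<in> borel_measurable borel" for h :: "real \<Rightarrow> 'b::{banach, second_countable_topology}"
    unfolding mu1 by (rule integral_density) (use that nn1 in auto)
  have int0: "(\<integral>\<theta>. r0 \<theta> \<partial>lborel) = 1"
  proof -
    have "(\<integral>\<theta>. (1::real) \<partial>\<mu>0) = 1"
      using prob_space.prob_space[OF assms(5)] by simp
    then show ?thesis using tr0[of "\<lambda>_. 1::real"] by simp
  qed
  have int1: "(\<integral>\<theta>. r1 \<theta> \<partial>lborel) = 1"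
  proof -
    have "(\<integral>\<theta>. (1::real) \<partial>\<mu>1) = 1"
      using prob_space.prob_space[OF assms(6)] by simp
    then show ?thesis using tr1[of "\<lambda>_. 1::real"] by simp
  qed
  have cism[measurable]: "cis \<in> borel_measurable borel"
    by (rule borel_measurable_continuous_onI) (auto intro!: continuous_intros)
  have cis0: "(\<integral>\<theta>. r0 \<theta> *\<^sub>R cis \<theta> \<partial>lborel) = 0"
    using assms(7) tr0[OF cism] unfolding M0plus_def by simp
  have cis1: "(\<integral>\<theta>. r1 \<theta> *\<^sub>R cis \<theta> \<partial>lborel) = 0"
    using assms(8) tr1[OF cism] unfolding M0plus_def by simp
  define g where "g = (\<lambda>s. r1 s - r0 s)"
  define G where "G = (\<lambda>\<theta>. \<integral>s. (if 0 \<le> s \<and> s \<le> \<theta> then g s else 0) \<partial>lborel)"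
  have gi: "integrable lborel g" unfolding g_def using r0i r1i by auto
  have [measurable]: "G \<in> borel_measurable borel" using G_facts(1)[OF gi] unfolding G_def .
  define K where "K = (\<integral>s. \<bar>g s\<bar> \<partial>lborel)"
  have GK: "\<And>\<theta>. \<bar>G \<theta>\<bar> \<le> K" using G_facts(2)[OF gi] unfolding G_def K_def .
  define lam where "lam = density (lborel \<Otimes>\<^sub>M lborel) (\<lambda>x. ennreal (indicator cyl x))"
  define d where "d = (\<lambda>x::real\<times>real. (1 - fst x) * r0 (snd x) + fst x * r1 (snd x))"
  define v where "v = (\<lambda>x::real\<times>real. - G (snd x))"
  have [measurable]: "d \<in> borel_measurable (lborel \<Otimes>\<^sub>M lborel)" "v \<in> borel_measurable (lborel \<Otimes>\<^sub>M lborel)"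
    unfolding d_def v_def by measurable
  have slam: "sets lam = sets borel" unfolding lam_def sets_density by (rule sets_lb2)
  have em: "emeasure lam A = emeasure (lborel \<Otimes>\<^sub>M lborel) (cyl \<inter> A)" if "A \<in> sets borel" for A
  proof -
    have A: "A \<in> sets (lborel \<Otimes>\<^sub>M lborel)" using that by (simp only: sets_lb2)
    have "emeasure lam A = (\<integral>\<^sup>+ x. ennreal (indicator cyl x) * indicator A x \<partial>(lborel \<Otimes>\<^sub>M lborel))"
      unfolding lam_def by (rule emeasure_density) (use A in auto)
    also have "\<dots> = (\<integral>\<^sup>+ x. indicator (cyl \<inter> A) x \<partial>(lborel \<Otimes>\<^sub>M lborel))"
      by (intro nn_integral_cong) (auto simp: indicator_def)
    also have "\<dots> = emeasure (lborel \<Otimes>\<^sub>M lborel) (cyl \<inter> A)"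
      using A cyl_sets by (intro nn_integral_indicator sets.Int)
    finally show ?thesis .
  qed
  have flam: "finite_measure lam"
  proof (rule finite_measureI)
    have "space lam = UNIV" unfolding lam_def by (simp add: space_pair_measure)
    then show "emeasure lam (space lam) \<noteq> \<infinity>" using em[of UNIV] cyl_meas by simp
  qed
  have cylb: "cyl \<in> sets borel" using cyl_sets by (simp only: sets_lb2)
  have "UNIV - cyl \<in> sets borel" using cylb by auto
  then have ref: "reference_measure lam"
    unfolding reference_measure_def using slam flam em[of "UNIV - cyl"] by simp
  have trl: "(\<integral>x. h x \<partial>lam) = (\<integral>x. indicator cyl x *\<^sub>R h x \<partial>(lborel \<Otimes>\<^sub>M lborel))"
    if "h \<in> borel_measurable (lborel \<Otimes>\<^sub>M lborel)" for h :: "real \<times> real \<Rightarrow> 'b::{banach, second_countable_topology}"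
    unfolding lam_def by (rule integral_density) (use that in auto)
  have intl: "integrable lam h \<longleftrightarrow> integrable (lborel \<Otimes>\<^sub>M lborel) (\<lambda>x. indicator cyl x *\<^sub>R h x)"
    if "h \<in> borel_measurable (lborel \<Otimes>\<^sub>M lborel)" for h :: "real \<times> real \<Rightarrow> 'b::{banach, second_countable_topology}"
    unfolding lam_def by (rule integrable_density) (use that in auto)
  have icyl: "integrable (lborel \<Otimes>\<^sub>M lborel) (indicator cyl :: real \<times> real \<Rightarrow> real)"
    using cyl_meas by (intro integrable_real_indicator cyl_sets) auto
  have cylI: "indicator cyl x = indicator {0..1} (fst x) * (indicator circ (snd x) :: real)" for x
    by (cases x) (auto simp: cyl_def indicator_def)
  have dom: "integrable (lborel \<Otimes>\<^sub>M lborel) (\<lambda>x. indicator {0..1::real} (fst x) * (\<bar>r0 (snd x)\<bar> + \<bar>r1 (snd x)\<bar>))"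
  proof -
    have a: "integrable lborel (\<lambda>t. indicator {0..1::real} t :: real)" by simp
    have b: "integrable lborel (\<lambda>s. \<bar>r0 s\<bar> + \<bar>r1 s\<bar>)" using r0i r1i by simp
    show ?thesis using prod_int[OF a b] by simp
  qed
  have dbound: "\<bar>indicator cyl x * d x\<bar> \<le> indicator {0..1::real} (fst x) * (\<bar>r0 (snd x)\<bar> + \<bar>r1 (snd x)\<bar>)" for x
  proof (cases "fst x \<in> {0..1}")
    case True
    then have "\<bar>(1 - fst x) * r0 (snd x)\<bar> \<le> \<bar>r0 (snd x)\<bar>" "\<bar>fst x * r1 (snd x)\<bar> \<le> \<bar>r1 (snd x)\<bar>"
      by (auto simp: abs_mult intro!: mult_left_le_one_le)
    then have "\<bar>d x\<bar> \<le> \<bar>r0 (snd x)\<bar> + \<bar>r1 (snd x)\<bar>" unfolding d_def by linarith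
    then show ?thesis using True by (auto simp: cylI indicator_def)
  next
    case False
    then show ?thesis by (simp add: cylI)
  qed
  have di: "integrable lam d"
    unfolding intl[OF \<open>d \<in> _\<close>] real_scaleR_def
    by (rule Bochner_Integration.integrable_bound[OF dom]) (use dbound in auto)
  have vi: "integrable lam v"
    unfolding intl[OF \<open>v \<in> _\<close>] real_scaleR_def
  proof (rule Bochner_Integration.integrable_bound[where f="\<lambda>x. K * indicator cyl x"])
    show "integrable (lborel \<Otimes>\<^sub>M lborel) (\<lambda>x. K * indicator cyl x)" using icyl by simp
    show "AE x in lborel \<Otimes>\<^sub>M lborel. norm (indicator cyl x * v x) \<le> norm (K * indicator cyl x)"
    proof (rule AE_I2)
      fix x :: "real \<times> real"
      have "\<bar>v x\<bar> \<le> \<bar>K\<bar>" using GK[of "snd x"] by (simp add: v_def)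
      then show "norm (indicator cyl x * v x) \<le> norm (K * indicator cyl x)"
        by (simp add: indicator_def abs_mult)
    qed
  qed measurable
  have ce: "continuity_eq \<mu>0 \<mu>1 lam d v"
    unfolding continuity_eq_def
  proof (intro allI impI)
    fix \<phi> \<phi>t \<phi>\<theta> :: "real \<times> real \<Rightarrow> real"
    assume C1: "C1_test \<phi> \<phi>t \<phi>\<theta>"
    have ct: "continuous_on UNIV \<phi>t" and cth: "continuous_on UNIV \<phi>\<theta>"
      using C1 unfolding C1_test_def by blast+
    have cp: "continuous_on UNIV \<phi>" by (rule C1_cont[OF C1])
    have [measurable]: "\<phi>t \<in> borel_measurable (lborel \<Otimes>\<^sub>M lborel)" "\<phi>\<theta> \<in> borel_measurable (lborel \<Otimes>\<^sub>M lborel)"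
      using ct cth by (simp_all add: lborel_prod borel_measurable_continuous_onI)
    have m1: "(\<lambda>\<theta>. \<phi> (1, \<theta>)) \<in> borel_measurable borel"
      by (rule borel_measurable_continuous_onI[OF cont_pair2[OF cp]])
    have m0: "(\<lambda>\<theta>. \<phi> (0, \<theta>)) \<in> borel_measurable borel"
      by (rule borel_measurable_continuous_onI[OF cont_pair2[OF cp]])
    have req: "(\<integral>s. r0 s \<partial>lborel) = (\<integral>s. r1 s \<partial>lborel)" using int0 int1 by simp
    have e1: "(\<integral>x. \<phi>t x * d x \<partial>lam) = (\<integral>x. indicator cyl x * (\<phi>t x * ((1 - fst x) * r0 (snd x) + fst x * r1 (snd x))) \<partial>(lborel \<Otimes>\<^sub>M lborel))"
      using trl[of "\<lambda>x. \<phi>t x * d x"] by (simp add: d_def)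
    have e2: "(\<integral>x. \<phi>\<theta> x * v x \<partial>lam) = (\<integral>x. indicator cyl x * (\<phi>\<theta> x * - G (snd x)) \<partial>(lborel \<Otimes>\<^sub>M lborel))"
      using trl[of "\<lambda>x. \<phi>\<theta> x * v x"] by (simp add: v_def)
    have e3: "(\<integral>\<theta>. \<phi> (1, \<theta>) \<partial>\<mu>1) = (\<integral>\<theta>. r1 \<theta> * \<phi> (1, \<theta>) \<partial>lborel)"
      using tr1[OF m1] by simp
    have e4: "(\<integral>\<theta>. \<phi> (0, \<theta>) \<partial>\<mu>0) = (\<integral>\<theta>. r0 \<theta> * \<phi> (0, \<theta>) \<partial>lborel)"
      using tr0[OF m0] by simp
    show "(\<integral>x. \<phi>t x * d x \<partial>lam) + (\<integral>x. \<phi>\<theta> x * v x \<partial>lam) = (\<integral>\<theta>. \<phi> (1, \<theta>) \<partial>\<mu>1) - (\<integral>\<theta>. \<phi> (0, \<theta>) \<partial>\<mu>0)"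
      unfolding e1 e2 e3 e4 G_def g_def by (rule core[OF r0i r1i r0z r1z req C1])
  qed
  have ic0: "integrable lborel (\<lambda>\<theta>. r0 \<theta> *\<^sub>R cis \<theta>)"
    by (rule Bochner_Integration.integrable_bound[OF r0i]) (auto simp: norm_cis)
  have ic1: "integrable lborel (\<lambda>\<theta>. r1 \<theta> *\<^sub>R cis \<theta>)"
    by (rule Bochner_Integration.integrable_bound[OF r1i]) (auto simp: norm_cis)
  have mc: "moment_constraint lam d"
    unfolding moment_constraint_def
  proof (intro ballI)
    fix A :: "real set" assume A[measurable]: "A \<in> sets borel"
    define H where "H x = complex_of_real (indicator A (fst x) * d x) * cis (snd x)" for x
    have [measurable]: "H \<in> borel_measurable (lborel \<Otimes>\<^sub>M lborel)" unfolding H_def by measurable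
    define F where "F t \<theta> = indicator cyl (t, \<theta>) *\<^sub>R H (t, \<theta>)" for t \<theta>
    have Feq: "F t \<theta> = (indicator {0..1} t * indicator A t) *\<^sub>R ((1 - t) *\<^sub>R (r0 \<theta> *\<^sub>R cis \<theta>) + t *\<^sub>R (r1 \<theta> *\<^sub>R cis \<theta>))" for t \<theta>
      by (cases "\<theta> \<in> circ") (auto simp: F_def H_def d_def cylI r0z r1z scaleR_conv_of_real algebra_simps)
    have intF: "integrable (lborel \<Otimes>\<^sub>M lborel) (\<lambda>(t, \<theta>). F t \<theta>)"
    proof (rule Bochner_Integration.integrable_bound[OF dom])
      show "(\<lambda>(t, \<theta>). F t \<theta>) \<in> borel_measurable (lborel \<Otimes>\<^sub>M lborel)"
        unfolding F_def by measurable
      show "AE x in lborel \<Otimes>\<^sub>M lborel. norm ((\<lambda>(t, \<theta>). F t \<theta>) x) \<le> norm (indicator {0..1::real} (fst x) * (\<bar>r0 (snd x)\<bar> + \<bar>r1 (snd x)\<bar>))"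
      proof (rule AE_I2)
        fix x :: "real \<times> real"
        have "norm ((\<lambda>(t, \<theta>). F t \<theta>) x) = \<bar>indicator A (fst x)\<bar> * \<bar>indicator cyl x * d x\<bar>"
          by (cases x) (simp add: F_def H_def norm_mult norm_cis abs_mult)
        also have "\<dots> \<le> \<bar>indicator cyl x * d x\<bar>" by (simp add: indicator_def)
        also have "\<dots> \<le> norm (indicator {0..1::real} (fst x) * (\<bar>r0 (snd x)\<bar> + \<bar>r1 (snd x)\<bar>))"
          using dbound[of x] by simp
        finally show "norm ((\<lambda>(t, \<theta>). F t \<theta>) x) \<le> norm (indicator {0..1::real} (fst x) * (\<bar>r0 (snd x)\<bar> + \<bar>r1 (snd x)\<bar>))" .
      qed
    qed
    have "(\<integral>x. H x \<partial>lam) = integral\<^sup>L (lborel \<Otimes>\<^sub>M lborel) (\<lambda>(t, \<theta>). F t \<theta>)"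
      using trl[of H] by (simp add: F_def split_beta')
    also have "\<dots> = (\<integral>t. (\<integral>\<theta>. F t \<theta> \<partial>lborel) \<partial>lborel)"
      using lborel_pair.integral_fst[OF intF] by simp
    also have "\<dots> = (\<integral>t. 0 \<partial>(lborel :: real measure))"
    proof (rule Bochner_Integration.integral_cong[OF refl])
      fix t :: real
      have "(\<integral>\<theta>. F t \<theta> \<partial>lborel) = (indicator {0..1} t * indicator A t) *\<^sub>R ((1 - t) *\<^sub>R (\<integral>\<theta>. r0 \<theta> *\<^sub>R cis \<theta> \<partial>lborel) + t *\<^sub>R (\<integral>\<theta>. r1 \<theta> *\<^sub>R cis \<theta> \<partial>lborel))"
      proof -
        have i0': "integrable lborel (\<lambda>\<theta>. (1 - t) *\<^sub>R (r0 \<theta> *\<^sub>R cis \<theta>))" using ic0 by (rule integrable_scaleR_right)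
        have i1': "integrable lborel (\<lambda>\<theta>. t *\<^sub>R (r1 \<theta> *\<^sub>R cis \<theta>))" using ic1 by (rule integrable_scaleR_right)
        show ?thesis unfolding Feq integral_scaleR_right Bochner_Integration.integral_add[OF i0' i1']
          by (simp only: integral_scaleR_right)
      qed
      then show "(\<integral>\<theta>. F t \<theta> \<partial>lborel) = 0" using cis0 cis1 by simp
    qed
    finally show "(\<integral>x. complex_of_real (indicator A (fst x) * d x) * cis (snd x) \<partial>lam) = 0"
      unfolding H_def by simp
  qed
  have fm[measurable]: "(\<lambda>x. f_act (d x) (v x)) \<in> borel_measurable (lborel \<Otimes>\<^sub>M lborel)"
    unfolding f_act_def by measurable
  have AEP: "AE x in lborel \<Otimes>\<^sub>M lborel. snd x \<in> circ \<longrightarrow> r0 (snd x) \<ge> c \<and> r1 (snd x) \<ge> c"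
  proof (rule lborel_pair.AE_pair_measure)
    show "{x \<in> space (lborel \<Otimes>\<^sub>M lborel). snd x \<in> circ \<longrightarrow> r0 (snd x) \<ge> c \<and> r1 (snd x) \<ge> c} \<in> sets (lborel \<Otimes>\<^sub>M lborel)"
      by measurable
    have "AE \<theta> in lborel. \<theta> \<in> circ \<longrightarrow> r0 \<theta> \<ge> c \<and> r1 \<theta> \<ge> c"
      using AE0 AE1 by eventually_elim auto
    then show "AE t in lborel. AE \<theta> in lborel. snd (t, \<theta>) \<in> circ \<longrightarrow> r0 (snd (t, \<theta>)) \<ge> c \<and> r1 (snd (t, \<theta>)) \<ge> c"
      by simp
  qed
  have act: "action lam d v < \<infinity>"
  proof -
    have "action lam d v = (\<integral>\<^sup>+ x. ennreal (indicator cyl x) * f_act (d x) (v x) \<partial>(lborel \<Otimes>\<^sub>M lborel))"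
      unfolding action_def lam_def by (rule nn_integral_density) auto
    also have "\<dots> \<le> (\<integral>\<^sup>+ x. ennreal (K\<^sup>2 / (2 * c)) * indicator cyl x \<partial>(lborel \<Otimes>\<^sub>M lborel))"
    proof (rule nn_integral_mono_AE)
      show "AE x in lborel \<Otimes>\<^sub>M lborel. ennreal (indicator cyl x) * f_act (d x) (v x) \<le> ennreal (K\<^sup>2 / (2 * c)) * indicator cyl x"
        using AEP
      proof eventually_elim
        case (elim x)
        show ?case
        proof (cases "x \<in> cyl")
          case False
          then show ?thesis by simp
        next
          case True
          obtain t \<theta> where x: "x = (t, \<theta>)" by (cases x)
          have t: "0 \<le> t" "t \<le> 1" and th: "\<theta> \<in> circ" using True x by (auto simp: cyl_def)
          have rc: "r0 \<theta> \<ge> c" "r1 \<theta> \<ge> c" using elim th x by auto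
          have "(1 - t) * c \<le> (1 - t) * r0 \<theta>" using rc t by (intro mult_left_mono) auto
          moreover have "t * c \<le> t * r1 \<theta>" using rc t by (intro mult_left_mono) auto
          ultimately have dc: "c \<le> d x" unfolding d_def x by (simp add: algebra_simps)
          then have dpos: "d x > 0" using assms(9) by linarith
          have "(v x)\<^sup>2 \<le> K\<^sup>2"
            using power_mono[OF GK[of "snd x"] abs_ge_zero, of 2] unfolding v_def by simp
          then have "(v x)\<^sup>2 / (2 * d x) \<le> K\<^sup>2 / (2 * c)"
            using dc assms(9) by (intro frac_le) auto
          then show ?thesis using True dpos by (simp add: f_act_def ennreal_leI)
        qed
      qed
    qed
    also have "\<dots> = ennreal (K\<^sup>2 / (2 * c)) * emeasure (lborel \<Otimes>\<^sub>M lborel) cyl"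
      by (rule nn_integral_cmult_indicator) (rule cyl_sets)
    also have "\<dots> < \<infinity>" using cyl_meas by (simp add: ennreal_mult_less_top)
    finally show ?thesis .
  qed
  have "admissible \<mu>0 \<mu>1 lam d v" unfolding admissible_def using ref di vi ce mc by blast
  then have mem: "(lam, d, v) \<in> {(lam, d, v). admissible \<mu>0 \<mu>1 lam d v}" by simp
  have "constrained_W2 \<mu>0 \<mu>1 \<le> (case (lam, d, v) of (lam, d, v) \<Rightarrow> action lam d v)"
    unfolding constrained_W2_def by (rule INF_lower[OF mem])
  then have "constrained_W2 \<mu>0 \<mu>1 \<le> action lam d v" by simp
  then show ?thesis using act by (rule order.strict_trans1)
qed


end
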